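(* The solution to the optimization problem \[ \underset{(\mu,\rho)}{\text{minimize}} \ \frac{1}{n}\sum_{i=1}^{n}\frac{1}{V_{i}}\sum_{v=1}^{V_{i}}\mathbb{E}\left\{\boldsymbol{\gamma}^\top\Sigma_{iv}^{*}\boldsymbol{\gamma}-\exp(\beta_{0i}+\mathbf{x}_{iv}^\top\boldsymbol{\beta}_{1})\right\}^{2}\quad\text{such that } \Sigma_{iv}^{*}=\rho\mu\mathbf{I}+(1-\rho)\mathbf{S}_{iv} \] is \[ \Sigma_{iv}^{*}=\frac{\psi^{2}}{\delta^{2}}\mu\mathbf{I}+\frac{\phi^{2}}{\delta^{2}}\mathbf{S}_{iv},\quad v=1,\dots,V_{i},\ i=1,\dots,n, \] and the minimum value of the objective is $\psi^{2}\phi^{2}/\delta^{2}$, where \[ \mu=\frac{1}{n(\boldsymbol{\gamma}^\top\boldsymbol{\gamma})}\sum_{i=1}^{n}\frac{1}{V_{i}}\sum_{v=1}^{V_{i}}\exp(\mathbf{w}_{iv}^\top\boldsymbol{\beta}_{i}), \] \[ \phi^{2}=\frac{1}{n}\sum_{i=1}^{n}\frac{1}{V_{i}}\sum_{v=1}^{V_{i}}\phi_{iv}^{2},\quad \psi^{2}=\frac{1}{n}\sum_{i=1}^{n}\frac{1}{V_{i}}\sum_{v=1}^{V_{i}}\psi_{iv}^{2},\quad \delta^{2}=\frac{1}{n}\sum_{i=1}^{n}\frac{1}{V_{i}}\sum_{v=1}^{V_{i}}\delta_{iv}^{2}, \] \[ \phi_{iv}^{2}=\{\mu(\boldsymbol{\gamma}^\top\boldsymbol{\gamma})-\exp(\mathbf{w}_{iv}^\top\boldsymbol{\beta}_{i})\}^{2},\quad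 \psi_{iv}^{2}=\mathbb{E}\{\boldsymbol{\gamma}^\top\mathbf{S}_{iv}\boldsymbol{\gamma}-\exp(\mathbf{w}_{iv}^\top\boldsymbol{\beta}_{i})\}^{2},\quad \delta_{iv}^{2}=\mathbb{E}\{\boldsymbol{\gamma}^\top\mathbf{S}_{iv}\boldsymbol{\gamma}-\mu(\boldsymbol{\gamma}^\top\boldsymbol{\gamma})\}^{2}. \] Moreover, for every $v\in\{1,\dots,V_i\}$ and $i\in\{1,\dots,n\}$, $\delta_{iv}^{2}=\phi_{iv}^{2}+\psi_{iv}^{2}$, and hence $\delta^{2}=\phi^{2}+\psi^{2}$.
   Context: Data: $\mathbf{y}_{ivt}\in\mathbb{R}^p$, $t=1,\dots,T_{iv}$, $v=1,\dots,V_i$, $i=1,\dots,n$, are multivariate normal with mean zero and covariance $\Sigma_{iv}$; $\mathbf{S}_{iv}$ is the sample covariance matrix of subject $i$ at visit $v$. Covariates $\mathbf{x}_{iv}\in\mathbb{R}^q$; model $\log(\boldsymbol{\gamma}^\top\Sigma_{iv}\boldsymbol{\gamma})=\beta_0+\mathbf{x}_{iv}^\top\boldsymbol{\beta}_1+u_i$ with $u_i\sim N(0,\sigma^2)$ and $\beta_{0i}=\beta_0+u_i$. Write $\mathbf{w}_{iv}=(1,\mathbf{x}_{iv}^\top)^\top$ and $\boldsymbol{\beta}_i=(\beta_{0i},\boldsymbol{\beta}_1^\top)^\top$, so $\beta_{0i}+\mathbf{x}_{iv}^\top\boldsymbol{\beta}_1=\mathbf{w}_{iv}^\top\boldsymbol{\beta}_i$.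 The vector $\boldsymbol{\gamma}\in\mathbb{R}^p$ and $\boldsymbol{\beta}_i$ are treated as given; the shrinkage parameters $\rho,\mu$ are common across all subjects and visits. $\mathbf{I}$ is the $p\times p$ identity matrix. *)

theory Defs
  imports "HOL-Probability.Probability"
begin

text \<open>Multivariate normal with mean zero and covariance matrix Sig, defined via
  the Cramer--Wold characterisation: Sig is a symmetric positive semidefinite
  matrix and every linear combination a'Y is univariate normal N(0, a'Sig a)
  (a point mass at 0 when the variance vanishes).\<close>
definition mvn0 :: "'a measure \<Rightarrow> ('a \<Rightarrow> real^'p) \<Rightarrow> real^'p^'p \<Rightarrow> bool" where
  "mvn0 M Y Sig \<longleftrightarrow>
     Y \<in> borel_measurable M \<and> transpose Sig = Sig \<and>
     (\<forall>a. 0 \<le> a \<bullet> (Sig *v a)) \<and>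
     (\<forall>a. (0 < a \<bullet> (Sig *v a) \<longrightarrow>
            distributed M lborel (\<lambda>\<omega>. a \<bullet> Y \<omega>)
              (\<lambda>x. ennreal (normal_density 0 (sqrt (a \<bullet> (Sig *v a))) x)))
        \<and> (a \<bullet> (Sig *v a) = 0 \<longrightarrow> (AE \<omega> in M. a \<bullet> Y \<omega> = 0)))"

definition outer :: "real^'p \<Rightarrow> real^'p^'p" where
  "outer y = (\<chi> j k. y $ j * y $ k)"

definition sample_cov :: "nat \<Rightarrow> (nat \<Rightarrow> real^'p) \<Rightarrow> real^'p^'p" where
  "sample_cov T Y = (1 / real T) *\<^sub>R (\<Sum>t = 1..T. outer (Y t))"

definition avg :: "nat \<Rightarrow> (nat \<Rightarrow> nat) \<Rightarrow> (nat \<Rightarrow> nat \<Rightarrow> real) \<Rightarrow> real" where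
  "avg n V f = (1 / real n) * (\<Sum>i = 1..n. (1 / real (V i)) * (\<Sum>v = 1..V i. f i v))"

end

theory Submission
  imports Defs
begin


lemma normal_facts:
  fixes X :: "'m \<Rightarrow> real"
  assumes M: "prob_space M"
    and D: "distributed M lborel X (\<lambda>x. ennreal (normal_density 0 \<sigma> x))" and s: "0 < \<sigma>"
  shows "X \<in> borel_measurable M"
    and "integrable M (\<lambda>\<omega>. (X \<omega>)^2)"
    and "integral\<^sup>L M (\<lambda>\<omega>. (X \<omega>)^2) = \<sigma>^2"
    and "integrable M (\<lambda>\<omega>. (X \<omega>)^4)"
    and "\<not> (AE \<omega> in M. X \<omega> \<le> c)"
proof -
  show Xm: "X \<in> borel_measurable M" using distributed_measurable[OF D] by simp
  have i: "integrable M (\<lambda>\<omega>. (X \<omega>)^k)" for k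
  proof -
    have "integrable lborel (\<lambda>x. normal_density 0 \<sigma> x * x^k)"
      using integrable_normal_moment[OF s, where \<mu>=0 and k=k] by simp
    then show ?thesis using distributed_integrable[OF D, of "\<lambda>x. x^k"] by simp
  qed
  show "integrable M (\<lambda>\<omega>. (X \<omega>)^2)" by (rule i)
  show "integrable M (\<lambda>\<omega>. (X \<omega>)^4)" by (rule i)
  have "integral\<^sup>L M (\<lambda>\<omega>. (X \<omega>)^2) = (\<integral>x. normal_density 0 \<sigma> x * x^2 \<partial>lborel)"
    using distributed_integral[OF D, of "\<lambda>x. x^2"] by simp
  also have "\<dots> = \<sigma>^2"
    using integral_normal_moment_even[OF s, where \<mu>=0 and k=1] by (simp add: field_simps power2_eq_square)
  finally show "integral\<^sup>L M (\<lambda>\<omega>. (X \<omega>)^2) = \<sigma>^2" .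
  show "\<not> (AE \<omega> in M. X \<omega> \<le> c)"
  proof
    assume ae: "AE \<omega> in M. X \<omega> \<le> c"
    have "emeasure M (X -` {c<..c+1} \<inter> space M) = 0"
    proof -
      have "AE \<omega> in M. \<not> (\<omega> \<in> X -` {c<..c+1} \<inter> space M)" using ae by eventually_elim auto
      then show ?thesis
        using Xm by (subst (asm) AE_iff_measurable[where N="X -` {c<..c+1} \<inter> space M"]) auto
    qed
    then have "(\<integral>\<^sup>+x. ennreal (normal_density 0 \<sigma> x) * indicator {c<..c+1} x \<partial>lborel) = 0"
      using distributed_emeasure[OF D, of "{c<..c+1}"] by simp
    then have "AE x in lborel. ennreal (normal_density 0 \<sigma> x) * indicator {c<..c+1} x = 0"
      by (subst (asm) nn_integral_0_iff_AE) auto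
    then have "AE x in lborel. x \<notin> {c<..c+1}"
    proof eventually_elim
      fix x assume h: "ennreal (normal_density 0 \<sigma> x) * indicator {c<..c+1} x = 0"
      have "0 < normal_density 0 \<sigma> x" using normal_density_pos s by blast
      then show "x \<notin> {c<..c+1}" using h by (auto simp: indicator_def split: if_splits)
    qed
    then have "emeasure lborel {c<..c+1} = 0"
      by (subst (asm) AE_iff_measurable[where N="{c<..c+1}"]) auto
    then show False by simp
  qed
qed

lemma qf_outer: "(\<gamma>::real^'p) \<bullet> (outer y *v \<gamma>) = (\<gamma> \<bullet> y)^2"
  by (simp add: outer_def matrix_vector_mult_def inner_vec_def power2_eq_square sum_distrib_left sum_distrib_right sum_product algebra_simps)

lemma qf_add: "(\<gamma>::real^'p) \<bullet> ((A + B) *v \<gamma>) = \<gamma> \<bullet> (A *v \<gamma>) + \<gamma> \<bullet> (B *v \<gamma>)"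
  by (simp add: matrix_vector_mult_def inner_vec_def algebra_simps sum.distrib)

lemma qf_scale: "(\<gamma>::real^'p) \<bullet> ((c *\<^sub>R A) *v \<gamma>) = c * (\<gamma> \<bullet> (A *v \<gamma>))"
  by (simp add: matrix_vector_mult_def inner_vec_def algebra_simps sum_distrib_left)

lemma qf_sum: "(\<gamma>::real^'p) \<bullet> ((\<Sum>t\<in>F. A t) *v \<gamma>) = (\<Sum>t\<in>F. \<gamma> \<bullet> (A t *v \<gamma>))"
  by (induction F rule: infinite_finite_induct) (auto simp: qf_add)

lemma qf_id: "(\<gamma>::real^'p) \<bullet> (mat 1 *v \<gamma>) = \<gamma> \<bullet> \<gamma>"
  by simp

lemma qf_sample_cov: "(\<gamma>::real^'p) \<bullet> (sample_cov T Y *v \<gamma>) = (1 / real T) * (\<Sum>t=1..T. (\<gamma> \<bullet> Y t)^2)"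
  by (simp add: sample_cov_def qf_scale qf_sum qf_outer)


lemma cell:
  fixes X :: "nat \<Rightarrow> 'm \<Rightarrow> real"
  assumes M: "prob_space M" and T: "1 \<le> T" and s: "0 < s"
    and D: "\<And>t. t \<in> {1..T} \<Longrightarrow> distributed M lborel (X t) (\<lambda>x. ennreal (normal_density 0 (sqrt s) x))"
  defines "Z \<equiv> (\<lambda>\<omega>. (1 / real T) * (\<Sum>t=1..T. (X t \<omega>)^2))"
  shows "integrable M Z" and "integrable M (\<lambda>\<omega>. (Z \<omega>)^2)" and "integral\<^sup>L M Z = s"
    and "0 < integral\<^sup>L M (\<lambda>\<omega>. (Z \<omega> - s)^2)"
proof -
  interpret prob_space M by (rule M)
  have ss: "0 < sqrt s" using s by simp
  note nf = normal_facts[OF M D ss]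
  have meas[measurable]: "X t \<in> borel_measurable M" if "t \<in> {1..T}" for t using nf(1)[OF that] .
  have i2: "integrable M (\<lambda>\<omega>. (X t \<omega>)^2)" if "t \<in> {1..T}" for t using nf(2)[OF that] .
  have e2: "integral\<^sup>L M (\<lambda>\<omega>. (X t \<omega>)^2) = s" if "t \<in> {1..T}" for t using nf(3)[OF that] s by simp
  have i4: "integrable M (\<lambda>\<omega>. (X t \<omega>)^4)" if "t \<in> {1..T}" for t using nf(4)[OF that] .
  show iZ: "integrable M Z" unfolding Z_def
    by (intro Bochner_Integration.integrable_mult_right Bochner_Integration.integrable_sum i2) auto
  show "integral\<^sup>L M Z = s" unfolding Z_def using i2 e2 T
    by (simp add: integral_sum)
  have i22: "integrable M (\<lambda>\<omega>. (X t \<omega>)^2 * (X u \<omega>)^2)" if "t \<in> {1..T}" "u \<in> {1..T}" for t u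
  proof (rule Bochner_Integration.integrable_bound[where f="\<lambda>\<omega>. (X t \<omega>)^4 + (X u \<omega>)^4"])
    show "integrable M (\<lambda>\<omega>. (X t \<omega>)^4 + (X u \<omega>)^4)" using i4 that by auto
    show "(\<lambda>\<omega>. (X t \<omega>)^2 * (X u \<omega>)^2) \<in> borel_measurable M" using that by measurable
    show "AE \<omega> in M. norm ((X t \<omega>)^2 * (X u \<omega>)^2) \<le> norm ((X t \<omega>)^4 + (X u \<omega>)^4)"
    proof (rule AE_I2)
      fix \<omega>
      define p where "p = (X t \<omega>)^2"
      define q where "q = (X u \<omega>)^2"
      have p0: "0 \<le> p" and q0: "0 \<le> q" unfolding p_def q_def by simp_all
      have f4: "(X t \<omega>)^4 = p^2" "(X u \<omega>)^4 = q^2" unfolding p_def q_def by (simp_all add: power_mult[symmetric])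
      have "0 \<le> (p - q)^2" by simp
      moreover have "(p - q)^2 = p*p - 2*(p*q) + q*q" by (simp add: power2_eq_square algebra_simps)
      moreover have "0 \<le> p*q" using p0 q0 by simp
      moreover have "0 \<le> (p - q) * (p - q)" by simp
      ultimately have "p * q \<le> p*p + q*q" by linarith
      then have "p * q \<le> p^2 + q^2" by (simp add: power2_eq_square)
      then show "norm ((X t \<omega>)^2 * (X u \<omega>)^2) \<le> norm ((X t \<omega>)^4 + (X u \<omega>)^4)"
        unfolding f4 using p0 q0 by (simp flip: p_def q_def)
    qed
  qed
  have Zsq: "(Z \<omega>)^2 = (1 / real T)^2 * (\<Sum>t=1..T. \<Sum>u=1..T. (X t \<omega>)^2 * (X u \<omega>)^2)" for \<omega>
    unfolding Z_def power_mult_distrib power2_eq_square[of "sum _ _"] sum_product by simp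
  show iZ2: "integrable M (\<lambda>\<omega>. (Z \<omega>)^2)" unfolding Zsq
    by (intro Bochner_Integration.integrable_mult_right Bochner_Integration.integrable_sum i22) auto
  show "0 < integral\<^sup>L M (\<lambda>\<omega>. (Z \<omega> - s)^2)"
  proof (rule ccontr)
    assume "\<not> ?thesis"
    moreover have iD: "integrable M (\<lambda>\<omega>. (Z \<omega> - s)^2)"
      using iZ iZ2 by (simp add: power2_diff)
    moreover have "0 \<le> integral\<^sup>L M (\<lambda>\<omega>. (Z \<omega> - s)^2)" by simp
    ultimately have "integral\<^sup>L M (\<lambda>\<omega>. (Z \<omega> - s)^2) = 0" by simp
    then have "AE \<omega> in M. (Z \<omega> - s)^2 = 0" using iD by (subst (asm) integral_nonneg_eq_0_iff_AE) auto
    then have "AE \<omega> in M. X 1 \<omega> \<le> sqrt (real T * s)"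
    proof eventually_elim
      fix \<omega> assume "(Z \<omega> - s)^2 = 0"
      then have "Z \<omega> = s" by simp
      then have "(\<Sum>t=1..T. (X t \<omega>)^2) = real T * s" unfolding Z_def using T by (simp add: field_simps)
      moreover have "(X 1 \<omega>)^2 \<le> (\<Sum>t=1..T. (X t \<omega>)^2)"
        using T by (intro member_le_sum) auto
      ultimately have "(X 1 \<omega>)^2 \<le> real T * s" by simp
      then show "X 1 \<omega> \<le> sqrt (real T * s)" by (simp add: real_le_rsqrt)
    qed
    then show False using nf(5)[of 1] T by auto
  qed
qed

lemma expand:
  fixes Z :: "'m \<Rightarrow> real"
  assumes M: "prob_space M" and iZ: "integrable M Z" and iZ2: "integrable M (\<lambda>\<omega>. (Z \<omega>)^2)"
    and EZ: "integral\<^sup>L M Z = e"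
  shows "integral\<^sup>L M (\<lambda>\<omega>. (a * (Z \<omega> - e) + b)^2) = a^2 * integral\<^sup>L M (\<lambda>\<omega>. (Z \<omega> - e)^2) + b^2"
proof -
  interpret prob_space M by (rule M)
  have iD: "integrable M (\<lambda>\<omega>. (Z \<omega> - e)^2)"
    using iZ iZ2 by (simp add: power2_diff)
  have iL: "integrable M (\<lambda>\<omega>. Z \<omega> - e)" using iZ by simp
  have eL: "integral\<^sup>L M (\<lambda>\<omega>. Z \<omega> - e) = 0" using iZ EZ by (simp add: prob_space)
  have "(\<lambda>\<omega>. (a * (Z \<omega> - e) + b)^2) = (\<lambda>\<omega>. a^2 * (Z \<omega> - e)^2 + (2*a*b) * (Z \<omega> - e) + b^2)"
    by (simp add: power2_eq_square algebra_simps)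
  then have "integral\<^sup>L M (\<lambda>\<omega>. (a * (Z \<omega> - e) + b)^2)
      = integral\<^sup>L M (\<lambda>\<omega>. a^2 * (Z \<omega> - e)^2 + (2*a*b) * (Z \<omega> - e) + b^2)" by simp
  also have "\<dots> = a^2 * integral\<^sup>L M (\<lambda>\<omega>. (Z \<omega> - e)^2) + (2*a*b) * integral\<^sup>L M (\<lambda>\<omega>. Z \<omega> - e) + b^2"
    using iD iL by (simp add: prob_space)
  finally show ?thesis using eL by simp
qed


lemma avg_cong:
  "(\<And>i v. i \<in> {1..n} \<Longrightarrow> v \<in> {1..V i} \<Longrightarrow> f i v = h i v) \<Longrightarrow> avg n V f = avg n V h"
  unfolding avg_def by (intro arg_cong2[where f="(*)"] refl sum.cong) auto

lemma avg_add: "avg n V (\<lambda>i v. f i v + h i v) = avg n V f + avg n V h"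
  unfolding avg_def by (simp add: sum.distrib distrib_left)

lemma avg_cmul: "avg n V (\<lambda>i v. c * f i v) = c * avg n V f"
proof -
  have "avg n V (\<lambda>i v. c * f i v) = (1 / real n) * (\<Sum>i = 1..n. c * ((1 / real (V i)) * (\<Sum>v = 1..V i. f i v)))"
    unfolding avg_def by (simp add: sum_distrib_left[symmetric] mult.left_commute)
  also have "\<dots> = (1 / real n) * (c * (\<Sum>i = 1..n. ((1 / real (V i)) * (\<Sum>v = 1..V i. f i v))))"
    by (simp only: sum_distrib_left)
  also have "\<dots> = c * avg n V f" unfolding avg_def by (simp only: mult_ac)
  finally show ?thesis .
qed

lemma avg_const:
  assumes "1 \<le> n" "\<And>i. i \<in> {1..n} \<Longrightarrow> 1 \<le> V i"
  shows "avg n V (\<lambda>i v. c) = c"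
proof -
  have "(\<Sum>i = 1..n. (1 / real (V i)) * (\<Sum>v = 1..V i. c)) = (\<Sum>i = 1..n. c)"
  proof (intro sum.cong refl)
    fix i assume "i \<in> {1..n}"
    then have "1 \<le> V i" by (rule assms(2))
    then show "(1 / real (V i)) * (\<Sum>v = 1..V i. c) = c" by simp
  qed
  then show ?thesis using assms(1) unfolding avg_def by simp
qed

lemma avg_pos:
  assumes "1 \<le> n" "\<And>i. i \<in> {1..n} \<Longrightarrow> 1 \<le> V i"
    and "\<And>i v. i \<in> {1..n} \<Longrightarrow> v \<in> {1..V i} \<Longrightarrow> 0 < f i v"
  shows "0 < avg n V f"
proof -
  have "0 < (\<Sum>i = 1..n. (1 / real (V i)) * (\<Sum>v = 1..V i. f i v))"
  proof (rule sum_pos)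
    show "finite {1..n}" "{1..n} \<noteq> {}" using assms(1) by auto
    fix i assume i: "i \<in> {1..n}"
    then have Vi: "1 \<le> V i" by (rule assms(2))
    have "0 < (\<Sum>v = 1..V i. f i v)" using Vi assms(3)[OF i] by (intro sum_pos) auto
    then show "0 < (1 / real (V i)) * (\<Sum>v = 1..V i. f i v)" using Vi by simp
  qed
  then show ?thesis unfolding avg_def using assms(1) by simp
qed

lemma avg_nonneg:
  assumes "\<And>i v. i \<in> {1..n} \<Longrightarrow> v \<in> {1..V i} \<Longrightarrow> 0 \<le> f i v"
  shows "0 \<le> avg n V f"
  unfolding avg_def using assms
  by (intro mult_nonneg_nonneg sum_nonneg) (auto intro!: sum_nonneg)

lemma final_alg:
  fixes \<psi> \<phi> g \<mu>0 \<delta> :: real and obj :: "real \<Rightarrow> real \<Rightarrow> real"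
  assumes psi: "0 < \<psi>" and phi: "0 \<le> \<phi>" and g: "0 < g" and d: "\<delta> = \<phi> + \<psi>"
    and obj: "\<And>\<mu> \<rho>. obj \<mu> \<rho> = (1 - \<rho>)^2 * \<psi> + \<rho>^2 * (\<phi> + g * (\<mu> - \<mu>0)^2)"
  shows "(\<forall>\<mu> \<rho>. \<psi> * \<phi> / \<delta> \<le> obj \<mu> \<rho>)
       \<and> obj \<mu>0 (\<psi> / \<delta>) = \<psi> * \<phi> / \<delta>
       \<and> (\<forall>\<mu> \<rho>. obj \<mu> \<rho> = \<psi> * \<phi> / \<delta> \<longrightarrow> \<mu> = \<mu>0 \<and> \<rho> = \<psi> / \<delta>)"
proof -
  have dpos: "0 < \<delta>" using psi phi d by simp
  have key: "obj \<mu> \<rho> - \<psi> * \<phi> / \<delta> =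
      ((\<psi> + A) * \<rho> - \<psi>)^2 / (\<psi> + A) + \<psi>^2 * (A - \<phi>) / ((\<psi> + A) * \<delta>)"
    if A: "A = \<phi> + g * (\<mu> - \<mu>0)^2" for \<mu> \<rho> A
  proof -
    have A0: "0 < \<psi> + A" using A psi phi g by (simp add: add_pos_nonneg)
    have d0: "0 < \<phi> + \<psi>" using dpos d by simp
    have "obj \<mu> \<rho> = (1 - \<rho>)^2 * \<psi> + \<rho>^2 * A" unfolding obj A ..
    moreover have "(1 - \<rho>)^2 * \<psi> + \<rho>^2 * A - \<psi> * \<phi> / (\<phi> + \<psi>) =
      ((\<psi> + A) * \<rho> - \<psi>)^2 / (\<psi> + A) + \<psi>^2 * (A - \<phi>) / ((\<psi> + A) * (\<phi> + \<psi>))"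
    proof -
      have n1: "\<psi> + A \<noteq> 0" "\<phi> + \<psi> \<noteq> 0" using A0 d0 by auto
      show ?thesis using n1 by (simp add: divide_simps) (simp add: power2_eq_square algebra_simps)
    qed
    ultimately show ?thesis unfolding d by simp
  qed
  have t1: "0 \<le> ((\<psi> + A) * \<rho> - \<psi>)^2 / (\<psi> + A)" and t2: "0 \<le> \<psi>^2 * (A - \<phi>) / ((\<psi> + A) * \<delta>)"
    if A: "A = \<phi> + g * (\<mu> - \<mu>0)^2" for \<mu> \<rho> A
    using A psi phi g dpos by (auto intro!: divide_nonneg_pos add_pos_nonneg mult_pos_pos)
  show ?thesis
  proof (intro conjI allI impI)
    fix \<mu> \<rho>
    show "\<psi> * \<phi> / \<delta> \<le> obj \<mu> \<rho>"
      using key[OF refl, of \<mu> \<rho>] t1[OF refl, of \<mu> \<rho>] t2[OF refl, of \<mu>] by linarith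
  next
    show "obj \<mu>0 (\<psi> / \<delta>) = \<psi> * \<phi> / \<delta>"
      using key[OF refl, of \<mu>0 "\<psi> / \<delta>"] dpos d by (simp add: field_simps)
  next
    fix \<mu> \<rho> assume eq: "obj \<mu> \<rho> = \<psi> * \<phi> / \<delta>"
    define A where "A = \<phi> + g * (\<mu> - \<mu>0)^2"
    have A0: "0 < \<psi> + A" using A_def psi phi g by (simp add: add_pos_nonneg)
    have z1: "((\<psi> + A) * \<rho> - \<psi>)^2 / (\<psi> + A) = 0" and z2: "\<psi>^2 * (A - \<phi>) / ((\<psi> + A) * \<delta>) = 0"
      using key[OF A_def, of \<rho>] t1[OF A_def, of \<rho>] t2[OF A_def] eq by linarith+
    from z2 A0 dpos psi have "A = \<phi>" by simp
    then have "g * (\<mu> - \<mu>0)^2 = 0" unfolding A_def by simp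
    then show "\<mu> = \<mu>0" using g by simp
    from z1 A0 have "(\<psi> + A) * \<rho> = \<psi>" by simp
    then show "\<rho> = \<psi> / \<delta>" using `A = \<phi>` d dpos by (simp add: field_simps)
  qed
qed

theorem theorem1:
  fixes M :: "'m measure"
    and n :: nat and V :: "nat \<Rightarrow> nat" and T :: "nat \<Rightarrow> nat \<Rightarrow> nat"
    and y :: "nat \<Rightarrow> nat \<Rightarrow> nat \<Rightarrow> 'm \<Rightarrow> real^'p"
    and Sig :: "nat \<Rightarrow> nat \<Rightarrow> real^'p^'p"
    and x :: "nat \<Rightarrow> nat \<Rightarrow> real^'q"
    and \<gamma> :: "real^'p" and \<beta>0 :: "nat \<Rightarrow> real" and \<beta>1 :: "real^'q"
    and S :: "nat \<Rightarrow> nat \<Rightarrow> 'm \<Rightarrow> real^'p^'p"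
    and e :: "nat \<Rightarrow> nat \<Rightarrow> real"
    and obj :: "real \<Rightarrow> real \<Rightarrow> real"
    and Sstar :: "real \<Rightarrow> real \<Rightarrow> nat \<Rightarrow> nat \<Rightarrow> 'm \<Rightarrow> real^'p^'p"
    and \<mu>0 \<phi>2 \<psi>2 \<delta>2 :: real
    and \<phi>2iv \<psi>2iv \<delta>2iv :: "nat \<Rightarrow> nat \<Rightarrow> real"
  assumes M: "prob_space M"
    and n: "1 \<le> n"
    and V: "\<And>i. i \<in> {1..n} \<Longrightarrow> 1 \<le> V i"
    and T: "\<And>i v. i \<in> {1..n} \<Longrightarrow> v \<in> {1..V i} \<Longrightarrow> 1 \<le> T i v"
    and normal: "\<And>i v t. i \<in> {1..n} \<Longrightarrow> v \<in> {1..V i} \<Longrightarrow> t \<in> {1..T i v} \<Longrightarrow>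
                   mvn0 M (y i v t) (Sig i v)"
    and model: "\<And>i v. i \<in> {1..n} \<Longrightarrow> v \<in> {1..V i} \<Longrightarrow>
                   \<gamma> \<bullet> (Sig i v *v \<gamma>) = exp (\<beta>0 i + x i v \<bullet> \<beta>1)"
    and S_def: "\<And>i v \<omega>. S i v \<omega> = sample_cov (T i v) (\<lambda>t. y i v t \<omega>)"
    and e_def: "\<And>i v. e i v = exp (\<beta>0 i + x i v \<bullet> \<beta>1)"
    and Sstar_def: "\<And>\<mu> \<rho> i v \<omega>. Sstar \<mu> \<rho> i v \<omega> =
                      (\<rho> * \<mu>) *\<^sub>R mat 1 + (1 - \<rho>) *\<^sub>R S i v \<omega>"
    and obj_def: "\<And>\<mu> \<rho>. obj \<mu> \<rho> =
                   avg n V (\<lambda>i v. integral\<^sup>L M (\<lambda>\<omega>. (\<gamma> \<bullet> (Sstar \<mu> \<rho> i v \<omega> *v \<gamma>) - e i v)\<^sup>2))"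
    and mu0_def: "\<mu>0 = avg n V e / (\<gamma> \<bullet> \<gamma>)"
    and phi_iv_def: "\<And>i v. \<phi>2iv i v = (\<mu>0 * (\<gamma> \<bullet> \<gamma>) - e i v)\<^sup>2"
    and psi_iv_def: "\<And>i v. \<psi>2iv i v = integral\<^sup>L M (\<lambda>\<omega>. (\<gamma> \<bullet> (S i v \<omega> *v \<gamma>) - e i v)\<^sup>2)"
    and delta_iv_def: "\<And>i v. \<delta>2iv i v = integral\<^sup>L M (\<lambda>\<omega>. (\<gamma> \<bullet> (S i v \<omega> *v \<gamma>) - \<mu>0 * (\<gamma> \<bullet> \<gamma>))\<^sup>2)"
    and phi_def: "\<phi>2 = avg n V \<phi>2iv"
    and psi_def: "\<psi>2 = avg n V \<psi>2iv"
    and delta_def: "\<delta>2 = avg n V \<delta>2iv"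
  shows "(\<forall>\<mu> \<rho>. \<psi>2 * \<phi>2 / \<delta>2 \<le> obj \<mu> \<rho>)
       \<and> obj \<mu>0 (\<psi>2 / \<delta>2) = \<psi>2 * \<phi>2 / \<delta>2
       \<and> (\<forall>\<mu> \<rho>. obj \<mu> \<rho> = \<psi>2 * \<phi>2 / \<delta>2 \<longrightarrow> \<mu> = \<mu>0 \<and> \<rho> = \<psi>2 / \<delta>2)
       \<and> (\<forall>i\<in>{1..n}. \<forall>v\<in>{1..V i}. \<forall>\<omega>.
            Sstar \<mu>0 (\<psi>2 / \<delta>2) i v \<omega> =
              (\<psi>2 / \<delta>2 * \<mu>0) *\<^sub>R mat 1 + (\<phi>2 / \<delta>2) *\<^sub>R S i v \<omega>)
       \<and> (\<forall>i\<in>{1..n}. \<forall>v\<in>{1..V i}. \<delta>2iv i v = \<phi>2iv i v + \<psi>2iv i v)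
       \<and> \<delta>2 = \<phi>2 + \<psi>2"
proof -
  define g where "g = \<gamma> \<bullet> \<gamma>"
  define Z where "Z i v \<omega> = \<gamma> \<bullet> (S i v \<omega> *v \<gamma>)" for i v \<omega>
  define m where "m = avg n V e"
  have epos: "0 < e i v" for i v using e_def by simp
  have g0: "0 < g"
  proof -
    have "1 \<in> {1..n}" using n by simp
    moreover have "1 \<in> {1..V 1}" using V[of 1] n by simp
    ultimately have "\<gamma> \<bullet> (Sig 1 1 *v \<gamma>) = e 1 1" using model e_def by simp
    then have "\<gamma> \<noteq> 0" using epos[of 1 1] by auto
    then show ?thesis unfolding g_def by simp
  qed
  have mg: "\<mu>0 * g = m" unfolding mu0_def m_def g_def using g0 g_def by simp
  have cellf: "integrable M (Z i v) \<and> integrable M (\<lambda>\<omega>. (Z i v \<omega>)^2) \<and> integral\<^sup>L M (Z i v) = e i v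
      \<and> 0 < \<psi>2iv i v" if iv: "i \<in> {1..n}" "v \<in> {1..V i}" for i v
  proof -
    have D: "distributed M lborel (\<lambda>\<omega>. \<gamma> \<bullet> y i v t \<omega>) (\<lambda>x. ennreal (normal_density 0 (sqrt (e i v)) x))"
      if "t \<in> {1..T i v}" for t
    proof -
      have "mvn0 M (y i v t) (Sig i v)" using normal iv that by blast
      moreover have "\<gamma> \<bullet> (Sig i v *v \<gamma>) = e i v" using model[OF iv] e_def by simp
      ultimately have h: "0 < \<gamma> \<bullet> (Sig i v *v \<gamma>) \<longrightarrow>
            distributed M lborel (\<lambda>\<omega>. \<gamma> \<bullet> y i v t \<omega>)
              (\<lambda>x. ennreal (normal_density 0 (sqrt (\<gamma> \<bullet> (Sig i v *v \<gamma>))) x))"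
        and eq: "\<gamma> \<bullet> (Sig i v *v \<gamma>) = e i v" unfolding mvn0_def by blast+
      show ?thesis using h epos[of i v] unfolding eq by blast
    qed
    have Zeq: "Z i v = (\<lambda>\<omega>. (1 / real (T i v)) * (\<Sum>t=1..T i v. (\<gamma> \<bullet> y i v t \<omega>)^2))"
      by (auto simp: Z_def S_def qf_sample_cov)
    note c = cell[OF M T[OF iv] epos[of i v] D]
    have "\<psi>2iv i v = integral\<^sup>L M (\<lambda>\<omega>. (Z i v \<omega> - e i v)^2)" by (simp add: psi_iv_def Z_def)
    then show ?thesis using c unfolding Zeq by simp
  qed
  have objiv: "integral\<^sup>L M (\<lambda>\<omega>. (\<gamma> \<bullet> (Sstar \<mu> \<rho> i v \<omega> *v \<gamma>) - e i v)^2)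
      = (1 - \<rho>)^2 * \<psi>2iv i v + \<rho>^2 * (\<mu> * g - e i v)^2"
    if iv: "i \<in> {1..n}" "v \<in> {1..V i}" for i v \<mu> \<rho>
  proof -
    have "(\<lambda>\<omega>. (\<gamma> \<bullet> (Sstar \<mu> \<rho> i v \<omega> *v \<gamma>) - e i v)^2)
        = (\<lambda>\<omega>. ((1 - \<rho>) * (Z i v \<omega> - e i v) + \<rho> * (\<mu> * g - e i v))^2)"
      by (simp add: Sstar_def qf_add qf_scale Z_def g_def algebra_simps)
    moreover have "integral\<^sup>L M (\<lambda>\<omega>. ((1 - \<rho>) * (Z i v \<omega> - e i v) + \<rho> * (\<mu> * g - e i v))^2)
        = (1 - \<rho>)^2 * integral\<^sup>L M (\<lambda>\<omega>. (Z i v \<omega> - e i v)^2) + (\<rho> * (\<mu> * g - e i v))^2"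
      using cellf[OF iv] by (intro expand[OF M]) auto
    ultimately show ?thesis by (simp add: psi_iv_def Z_def power_mult_distrib)
  qed
  have deliv: "\<delta>2iv i v = \<phi>2iv i v + \<psi>2iv i v" if iv: "i \<in> {1..n}" "v \<in> {1..V i}" for i v
  proof -
    have "\<delta>2iv i v = integral\<^sup>L M (\<lambda>\<omega>. (1 * (Z i v \<omega> - e i v) + (e i v - \<mu>0 * g))^2)"
      by (simp add: delta_iv_def Z_def g_def)
    also have "\<dots> = 1^2 * integral\<^sup>L M (\<lambda>\<omega>. (Z i v \<omega> - e i v)^2) + (e i v - \<mu>0 * g)^2"
      using cellf[OF iv] by (intro expand[OF M]) auto
    finally show ?thesis by (simp add: psi_iv_def phi_iv_def Z_def g_def power2_commute)
  qed
  have psipos: "0 < \<psi>2" unfolding psi_def using n V cellf by (intro avg_pos) auto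
  have phinn: "0 \<le> \<phi>2" unfolding phi_def phi_iv_def by (intro avg_nonneg) simp
  have dsum: "\<delta>2 = \<phi>2 + \<psi>2"
    unfolding delta_def phi_def psi_def avg_add[symmetric] by (intro avg_cong deliv)
  have ac: "avg n V (\<lambda>i v. c) = c" for c by (rule avg_const[OF n V])
  have avgA: "avg n V (\<lambda>i v. (\<mu> * g - e i v)^2) = \<phi>2 + g^2 * (\<mu> - \<mu>0)^2" for \<mu>
  proof -
    have "avg n V (\<lambda>i v. (\<mu> * g - e i v)^2)
        = avg n V (\<lambda>i v. (\<mu> * g - m)^2 + ((2 * (\<mu> * g - m)) * (m + (-1) * e i v) + \<phi>2iv i v))"
    proof (intro avg_cong)
      fix i v
      have "\<phi>2iv i v = (m - e i v)^2" by (simp add: phi_iv_def mg[symmetric] g_def)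
      then show "(\<mu> * g - e i v)^2 = (\<mu> * g - m)^2 + ((2 * (\<mu> * g - m)) * (m + (-1) * e i v) + \<phi>2iv i v)"
        by (simp add: power2_eq_square algebra_simps)
    qed
    also have "\<dots> = (\<mu> * g - m)^2 + ((2 * (\<mu> * g - m)) * (m + (-1) * m) + \<phi>2)"
      unfolding avg_add avg_cmul phi_def ac by (simp add: m_def)
    also have "\<dots> = \<phi>2 + g^2 * (\<mu> - \<mu>0)^2"
      using mg[symmetric] by (simp add: power2_eq_square algebra_simps)
    finally show ?thesis .
  qed
  have objf: "obj \<mu> \<rho> = (1 - \<rho>)^2 * \<psi>2 + \<rho>^2 * (\<phi>2 + g^2 * (\<mu> - \<mu>0)^2)" for \<mu> \<rho>
  proof -
    have "obj \<mu> \<rho> = avg n V (\<lambda>i v. (1 - \<rho>)^2 * \<psi>2iv i v + \<rho>^2 * (\<mu> * g - e i v)^2)"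
      unfolding obj_def by (intro avg_cong objiv)
    also have "\<dots> = (1 - \<rho>)^2 * \<psi>2 + \<rho>^2 * avg n V (\<lambda>i v. (\<mu> * g - e i v)^2)"
      unfolding avg_add avg_cmul psi_def ..
    finally show ?thesis unfolding avgA .
  qed
  have g2: "0 < g^2" using g0 by simp
  note fa = final_alg[OF psipos phinn g2 dsum objf]
  have dpos: "0 < \<delta>2" using dsum psipos phinn by simp
  have sst: "Sstar \<mu>0 (\<psi>2 / \<delta>2) i v \<omega> = (\<psi>2 / \<delta>2 * \<mu>0) *\<^sub>R mat 1 + (\<phi>2 / \<delta>2) *\<^sub>R S i v \<omega>" for i v \<omega>
  proof -
    have "1 - \<psi>2 / \<delta>2 = \<phi>2 / \<delta>2" using dpos dsum by (simp add: field_simps)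
    then show ?thesis unfolding Sstar_def by simp
  qed
  show ?thesis using fa sst deliv dsum by blast
qed

end
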